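(* Consider the non-stationary risk-aware bandit and UCB algorithm with parameter $\alpha$ described in the context, satisfying the stated assumption with constants $\theta>1$, $\xi>1$, $1/2\le\eta<1$, where $\xi$ is large enough that $\alpha>2$ satisfies $\xi\eta(1-\eta)\le\alpha<\xi(1-\eta)$. Let $\bar\rho_n=\frac1n\sum_{i=1}^K T_i(n)\hat\rho_{i,T_i(n)}$. Then 1. $|\mu^*-\mathbb{E}[\bar\rho_n]|=O\big(\exp(2\beta R)\,n^{\frac{\alpha}{\xi(1-\eta)}-1}\big)$, in particular $\lim_{n\to\infty}\mathbb{E}[\bar\rho_n]=\mu^*$; 2. there exist constants $\theta'>1$, $\xi'>1$ and $1/2\le\eta'<1$ such that for every $n\in\mathbb{N}$ and $z\ge1$, $$\mathbb{P}[n\bar\rho_n-n\mu^*\ge n^{\eta'}z]\le\frac{\theta'}{z^{\xi'}},\qquad \mathbb{P}[n\bar\rho_n-n\mu^*\le -n^{\eta'}z]\le\frac{\theta'}{z^{\xi'}},$$ where $\eta'=\frac{\alpha}{\xi(1-\eta)}$, $\xi'=\alpha-1$, and $\theta'$ depends on $R,K,\Delta_{\min},\beta,\theta,\xi,\alpha,\eta$.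
   Context: Bandit with $K$ arms; for each arm $i$ there is a sequence of random costs $(x_{i,t})_{t\ge1}$ with values in $[-R,R]$, $x_{i,t}$ being the cost at the $t$-th pull of arm $i$; the distributions may shift over time. Fix $\beta>0$ and let $\hat\rho_{i,n}=\frac1\beta\ln\big(\frac1n\sum_{t=1}^n\exp(\beta x_{i,t})\big)$ and $\mu_{i,n}=\mathbb{E}[\hat\rho_{i,n}]$. Assumption: for every arm $i$, $\lim_{n\to\infty}\mu_{i,n}=\mu_i$ exists, and there are constants $\theta>1$, $\xi>1$, $1/2\le\eta<1$ with $\mathbb{P}[n\hat\rho_{i,n}-n\mu_i\ge n^\eta z]\le\theta/z^\xi$ and $\mathbb{P}[n\hat\rho_{i,n}-n\mu_i\le -n^\eta z]\le\theta/z^\xi$ for all $z\ge1$, $n\in\mathbb{N}$. There is a unique arm $i^*$ attaining $\mu^*=\min_i\mu_i$; $\Delta_i=\mu_i-\mu^*$ and $\Delta_{\min}=\min_{i\ne i^*}\Delta_i$. Algorithm (with $\alpha>0$): pull each arm once, then at each timestep $t$ pull $a_t=\arg\min_i\{\hat\rho_{i,T_i(t-1)}-b_{t,T_i(t-1)}\}$ with $b_{t,s}=\theta^{1/\xi}t^{\alpha/\xi}/s^{1-\eta}$, where $T_i(n)$ is the number of times arm $i$ has been pulled during timesteps $1,\dots,n$. *)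

theory Defs
  imports "HOL-Probability.Probability" "HOL-Library.Landau_Symbols"
begin

text \<open>Arms are indexed 0..K-1. A cost table c :: arm => pull index => real gives
  c i t = cost observed at the t-th pull (t >= 1) of arm i (for a fixed outcome).\<close>

definition rho_hat :: "real \<Rightarrow> (nat \<Rightarrow> nat \<Rightarrow> real) \<Rightarrow> nat \<Rightarrow> nat \<Rightarrow> real" where
  "rho_hat \<beta> c i n = (1 / \<beta>) * ln ((1 / real n) * (\<Sum>t = 1..n. exp (\<beta> * c i t)))"

definition cnt :: "nat list \<Rightarrow> nat \<Rightarrow> nat" where
  "cnt h i = length (filter (\<lambda>j. j = i) h)"

definition bonus :: "real \<Rightarrow> real \<Rightarrow> real \<Rightarrow> real \<Rightarrow> nat \<Rightarrow> nat \<Rightarrow> real" where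
  "bonus \<theta> \<xi> \<eta> \<alpha> t s = \<theta> powr (1 / \<xi>) * real t powr (\<alpha> / \<xi>) / real s powr (1 - \<eta>)"

text \<open>Arm chosen at timestep t = length h + 1, given the history h of previous pulls:
  the first K steps pull each arm once; afterwards the arm minimising the index
  (ties broken towards the smallest arm index).\<close>
definition next_arm :: "nat \<Rightarrow> real \<Rightarrow> real \<Rightarrow> real \<Rightarrow> real \<Rightarrow> real \<Rightarrow> (nat \<Rightarrow> nat \<Rightarrow> real)
    \<Rightarrow> nat list \<Rightarrow> nat" where
  "next_arm K \<beta> \<theta> \<xi> \<eta> \<alpha> c h =
     (if length h < K then length h
      else (let idx = (\<lambda>i. rho_hat \<beta> c i (cnt h i) - bonus \<theta> \<xi> \<eta> \<alpha> (length h + 1) (cnt h i))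
            in LEAST i. i < K \<and> (\<forall>j<K. idx i \<le> idx j)))"

primrec hist :: "nat \<Rightarrow> real \<Rightarrow> real \<Rightarrow> real \<Rightarrow> real \<Rightarrow> real \<Rightarrow> (nat \<Rightarrow> nat \<Rightarrow> real)
    \<Rightarrow> nat \<Rightarrow> nat list" where
  "hist K \<beta> \<theta> \<xi> \<eta> \<alpha> c 0 = []"
| "hist K \<beta> \<theta> \<xi> \<eta> \<alpha> c (Suc n) =
     hist K \<beta> \<theta> \<xi> \<eta> \<alpha> c n @ [next_arm K \<beta> \<theta> \<xi> \<eta> \<alpha> c (hist K \<beta> \<theta> \<xi> \<eta> \<alpha> c n)]"

definition T_pulls :: "nat \<Rightarrow> real \<Rightarrow> real \<Rightarrow> real \<Rightarrow> real \<Rightarrow> real \<Rightarrow> (nat \<Rightarrow> nat \<Rightarrow> real)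
    \<Rightarrow> nat \<Rightarrow> nat \<Rightarrow> nat" where
  "T_pulls K \<beta> \<theta> \<xi> \<eta> \<alpha> c i n = cnt (hist K \<beta> \<theta> \<xi> \<eta> \<alpha> c n) i"

definition rho_bar :: "nat \<Rightarrow> real \<Rightarrow> real \<Rightarrow> real \<Rightarrow> real \<Rightarrow> real \<Rightarrow> (nat \<Rightarrow> nat \<Rightarrow> real)
    \<Rightarrow> nat \<Rightarrow> real" where
  "rho_bar K \<beta> \<theta> \<xi> \<eta> \<alpha> c n =
     (1 / real n) * (\<Sum>i<K. real (T_pulls K \<beta> \<theta> \<xi> \<eta> \<alpha> c i n)
                      * rho_hat \<beta> c i (T_pulls K \<beta> \<theta> \<xi> \<eta> \<alpha> c i n))"

end

theory Submission
  imports Defs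
begin



lemma rho_hat_bound:
  assumes b: "\<And>t. 1 \<le> t \<Longrightarrow> \<bar>c i t\<bar> \<le> R" and s: "1 \<le> s" and \<beta>: "\<beta> > 0"
  shows "\<bar>rho_hat \<beta> c i s\<bar> \<le> R"
proof -
  let ?m = "(1 / real s) * (\<Sum>t = 1..s. exp (\<beta> * c i t))"
  have "(\<Sum>t = 1..s. exp (\<beta> * c i t)) \<le> (\<Sum>t = 1..s. exp (\<beta> * R))"
    by (rule sum_mono) (use b \<beta> in \<open>auto intro!: mult_left_mono simp: abs_le_iff\<close>)
  then have up: "?m \<le> exp (\<beta> * R)" using s by (simp add: field_simps)
  have "(\<Sum>t = 1..s. exp (- (\<beta> * R))) \<le> (\<Sum>t = 1..s. exp (\<beta> * c i t))"
  proof (rule sum_mono)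
    fix t assume "t \<in> {1..s}"
    then have "- c i t \<le> R" using b by (auto simp: abs_le_iff)
    then have "\<beta> * (- c i t) \<le> \<beta> * R" using \<beta> by (intro mult_left_mono) auto
    then show "exp (- (\<beta> * R)) \<le> exp (\<beta> * c i t)" by simp
  qed
  then have lo: "exp (- (\<beta> * R)) \<le> ?m" using s by (simp add: field_simps)
  have mpos: "?m > 0" using lo by (meson exp_gt_zero less_le_trans)
  have "ln ?m \<le> \<beta> * R" using up mpos by (metis ln_exp ln_le_cancel_iff exp_gt_zero)
  moreover have "- (\<beta> * R) \<le> ln ?m" using lo mpos by (metis ln_exp ln_le_cancel_iff exp_gt_zero)
  ultimately have "\<bar>ln ?m\<bar> \<le> \<beta> * R" by auto
  then show ?thesis unfolding rho_hat_def using \<beta>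
    by (simp add: abs_mult field_simps)
qed

lemma ln_ge_inv: "(q::real) > 0 \<Longrightarrow> 1 - 1 / q \<le> ln q"
proof -
  assume q: "q > 0"
  have "ln (inverse q) \<le> inverse q - 1" using q by (intro ln_le_minus_one) auto
  then show ?thesis using q ln_div[of 1 q] by (simp add: inverse_eq_divide)
qed

lemma log_step_bound:
  fixes S a s :: real
  assumes "S > 0" "a > 0" "s \<ge> 1"
  shows "-1 \<le> s * ln (((S + a) / (s + 1)) / (S / s))"
    and "s * ln (((S + a) / (s + 1)) / (S / s)) \<le> s * a / S"
proof -
  let ?q = "((S + a) / (s + 1)) / (S / s)"
  have qpos: "?q > 0" using assms by auto
  have "ln ?q \<le> ?q - 1" using qpos by (rule ln_le_minus_one)
  moreover have "s * (?q - 1) \<le> s * a / S"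
  proof -
    have "S + S * s \<noteq> 0" "(s + 1) * S \<noteq> 0" using assms by (auto simp: add_pos_pos) (smt (verit) mult_pos_pos)
    then have "s * (?q - 1) = s * (s * a - S) / ((s + 1) * S)" using assms by (simp add: field_simps)
    also have "\<dots> \<le> s * (s * a) / ((s + 1) * S)" using assms by (intro divide_right_mono mult_left_mono) auto
    also have "\<dots> = (s / (s + 1)) * (s * a / S)" by simp
    also have "\<dots> \<le> s * a / S" using assms by (intro mult_left_le_one_le) auto
    finally show ?thesis .
  qed
  ultimately show "s * ln ?q \<le> s * a / S" using assms
    by (meson dual_order.trans mult_left_mono order_trans zero_le_one) 
  have "1 - 1 / ?q \<le> ln ?q" using qpos by (rule ln_ge_inv)
  moreover have "-1 \<le> s * (1 - 1 / ?q)"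
  proof -
    have "S * s + a * s \<noteq> 0" "S + a \<noteq> 0" using assms by (auto simp: add_pos_pos) (smt (verit) mult_pos_pos)+
    then have "s * (1 - 1 / ?q) = (s * a - S) / (S + a)" using assms by (simp add: field_simps)
    also have "\<dots> \<ge> - S / (S + a)" using assms by (intro divide_right_mono) auto
    finally have "s * (1 - 1 / ?q) \<ge> - S / (S + a)" .
    moreover have "- S / (S + a) \<ge> -1" using assms by (simp add: field_simps)
    ultimately show ?thesis by linarith
  qed
  ultimately show "-1 \<le> s * ln ?q" using assms
    by (smt (verit, best) mult_left_mono)
qed



lemma F_step:
  assumes b: "\<And>t. 1 \<le> t \<Longrightarrow> \<bar>c i t\<bar> \<le> R" and \<beta>: "\<beta> > 0"
  shows "\<bar>real (Suc s) * rho_hat \<beta> c i (Suc s) - real s * rho_hat \<beta> c i s\<bar> \<le> R + exp (2 * \<beta> * R) / \<beta>"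
proof (cases "s = 0")
  case True
  have "rho_hat \<beta> c i 1 = c i 1" using \<beta> by (simp add: rho_hat_def)
  moreover have "\<bar>c i 1\<bar> \<le> R" using b by simp
  moreover have "exp (2 * \<beta> * R) / \<beta> \<ge> 0" using \<beta> by simp
  ultimately show ?thesis using True by simp
next
  case False
  then have s1: "real s \<ge> 1" by simp
  define S where "S = (\<Sum>t = 1..s. exp (\<beta> * c i t))"
  define a where "a = exp (\<beta> * c i (Suc s))"
  have Spos: "S > 0" unfolding S_def using False by (intro sum_pos) auto
  have apos: "a > 0" unfolding a_def by simp
  have sumS: "(\<Sum>t = 1..Suc s. exp (\<beta> * c i t)) = S + a"
    unfolding S_def a_def by (simp add: sum.cl_ivl_Suc)
  have e1: "real (Suc s) * rho_hat \<beta> c i (Suc s) = (1 + real s) * ln ((S + a) / (1 + real s)) / \<beta>"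
    unfolding rho_hat_def sumS by simp
  have e0: "real s * rho_hat \<beta> c i s = real s * ln (S / real s) / \<beta>"
    unfolding rho_hat_def S_def[symmetric] by simp
  have lnq: "ln ((S + a) / (1 + real s)) - ln (S / real s) = ln (((S + a) / (1 + real s)) / (S / real s))"
    using Spos apos s1 by (subst ln_div) auto
  have "\<beta> * (real (Suc s) * rho_hat \<beta> c i (Suc s) - real s * rho_hat \<beta> c i s)
      = ln ((S + a) / (1 + real s)) + real s * ln (((S + a) / (1 + real s)) / (S / real s))"
    unfolding e1 e0 lnq[symmetric] using \<beta> by (simp add: field_simps)
  moreover have "\<bar>ln ((S + a) / (1 + real s))\<bar> \<le> \<beta> * R"
  proof -
    have "\<bar>rho_hat \<beta> c i (Suc s)\<bar> \<le> R" by (rule rho_hat_bound[of c i R, OF b _ \<beta>]) auto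
    moreover have "rho_hat \<beta> c i (Suc s) = ln ((S + a) / (1 + real s)) / \<beta>"
      unfolding rho_hat_def sumS by simp
    ultimately show ?thesis using \<beta> by (simp add: abs_divide field_simps)
  qed
  moreover have "-1 \<le> real s * ln (((S + a) / (1 + real s)) / (S / real s))"
    using log_step_bound(1)[OF Spos apos s1] by (simp add: add.commute)
  moreover have "real s * ln (((S + a) / (1 + real s)) / (S / real s)) \<le> exp (2 * \<beta> * R)"
  proof -
    have "S \<ge> (\<Sum>t = 1..s. exp (- (\<beta> * R)))" unfolding S_def
    proof (rule sum_mono)
      fix t assume "t \<in> {1..s}"
      then have "- c i t \<le> R" using b by (auto simp: abs_le_iff)
      then have "\<beta> * (- c i t) \<le> \<beta> * R" using \<beta> by (intro mult_left_mono) auto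
      then show "exp (- (\<beta> * R)) \<le> exp (\<beta> * c i t)" by simp
    qed
    then have Sge: "S \<ge> real s * exp (- (\<beta> * R))" by simp
    have "a \<le> exp (\<beta> * R)" unfolding a_def using b[of "Suc s"] \<beta>
      by (auto simp: abs_le_iff intro!: mult_left_mono)
    then have "real s * a \<le> real s * exp (\<beta> * R)" using s1 by simp
    also have "\<dots> = exp (2 * \<beta> * R) * (real s * exp (- (\<beta> * R)))"
      by (simp add: exp_add[symmetric] exp_minus field_simps)
    also have "\<dots> \<le> exp (2 * \<beta> * R) * S" using Sge by simp
    finally have "real s * a / S \<le> exp (2 * \<beta> * R)" using Spos by (simp add: field_simps)
    then show ?thesis using log_step_bound(2)[OF Spos apos s1] by (simp add: add.commute)
  qed
  moreover have "exp (2 * \<beta> * R) \<ge> 1"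
  proof -
    have "R \<ge> 0" using b[of 1] by simp
    then show ?thesis using \<beta> by simp
  qed
  ultimately have "\<bar>\<beta> * (real (Suc s) * rho_hat \<beta> c i (Suc s) - real s * rho_hat \<beta> c i s)\<bar>
      \<le> \<beta> * R + exp (2 * \<beta> * R)"
    unfolding abs_le_iff by linarith
  moreover have "\<beta> * R + exp (2 * \<beta> * R) = \<beta> * (R + exp (2 * \<beta> * R) / \<beta>)"
    using \<beta> by (simp add: distrib_left)
  ultimately have "\<beta> * \<bar>real (Suc s) * rho_hat \<beta> c i (Suc s) - real s * rho_hat \<beta> c i s\<bar>
      \<le> \<beta> * (R + exp (2 * \<beta> * R) / \<beta>)" using \<beta> by (simp add: abs_mult)
  then show ?thesis using \<beta> by (rule mult_left_le_imp_le) 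
qed



lemma F_lip:
  assumes b: "\<And>t. 1 \<le> t \<Longrightarrow> \<bar>c i t\<bar> \<le> R" and \<beta>: "\<beta> > 0" and mn: "m \<le> n"
  shows "\<bar>(real n * rho_hat \<beta> c i n - real n * mu) - (real m * rho_hat \<beta> c i m - real m * mu)\<bar>
         \<le> (R + exp (2 * \<beta> * R) / \<beta> + \<bar>mu\<bar>) * (real n - real m)"
  using mn
proof (induction n rule: dec_induct)
  case base then show ?case by simp
next
  case (step n)
  let ?G = "\<lambda>k. real k * rho_hat \<beta> c i k - real k * mu"
  let ?L = "R + exp (2 * \<beta> * R) / \<beta> + \<bar>mu\<bar>"
  have "\<bar>real (Suc n) * rho_hat \<beta> c i (Suc n) - real n * rho_hat \<beta> c i n\<bar> \<le> R + exp (2 * \<beta> * R) / \<beta>"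
    by (rule F_step[of c i R, OF b \<beta>])
  moreover have "?G (Suc n) - ?G n = (real (Suc n) * rho_hat \<beta> c i (Suc n) - real n * rho_hat \<beta> c i n) - mu"
    by (simp add: algebra_simps)
  moreover have "\<bar>(real (Suc n) * rho_hat \<beta> c i (Suc n) - real n * rho_hat \<beta> c i n) - mu\<bar>
     \<le> \<bar>real (Suc n) * rho_hat \<beta> c i (Suc n) - real n * rho_hat \<beta> c i n\<bar> + \<bar>mu\<bar>"
    by (rule abs_triangle_ineq4)
  ultimately have "\<bar>?G (Suc n) - ?G n\<bar> \<le> ?L" by linarith
  moreover have "\<bar>?G (Suc n) - ?G m\<bar> \<le> \<bar>?G (Suc n) - ?G n\<bar> + \<bar>?G n - ?G m\<bar>" by linarith
  moreover have Lq: "\<And>L::real. L * (real (Suc n) - real m) = L + L * (real n - real m)" by (simp add: algebra_simps)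
  ultimately show ?case using step.IH Lq[of ?L] by linarith
qed

lemma bonus_mul:
  assumes "s > 0"
  shows "real s * (w / real s powr (1 - \<eta>)) = real s powr \<eta> * w"
proof -
  have "real s powr (1 - \<eta>) = real s / real s powr \<eta>" using assms by (simp add: powr_diff)
  then show ?thesis using assms by (simp add: field_simps)
qed



context
  fixes K :: nat and \<beta> \<theta> \<xi> \<eta> \<alpha> :: real and c :: "nat \<Rightarrow> nat \<Rightarrow> real"
begin

abbreviation "HH n \<equiv> hist K \<beta> \<theta> \<xi> \<eta> \<alpha> c n"
abbreviation "TT i n \<equiv> T_pulls K \<beta> \<theta> \<xi> \<eta> \<alpha> c i n"
abbreviation "arm n \<equiv> next_arm K \<beta> \<theta> \<xi> \<eta> \<alpha> c (HH n)"
abbreviation "idx h i \<equiv> rho_hat \<beta> c i (cnt h i) - bonus \<theta> \<xi> \<eta> \<alpha> (length h + 1) (cnt h i)"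

lemma len_hist: "length (HH n) = n"
  by (induction n) auto

lemma cnt_snoc: "cnt (h @ [a]) i = cnt h i + (if a = i then 1 else 0)"
  by (simp add: cnt_def)

lemma next_arm_min:
  assumes "K > 0" "length h \<ge> K"
  shows "next_arm K \<beta> \<theta> \<xi> \<eta> \<alpha> c h < K \<and>
         (\<forall>j<K. idx h (next_arm K \<beta> \<theta> \<xi> \<eta> \<alpha> c h) \<le> idx h j)"
proof -
  let ?f = "\<lambda>i. idx h i"
  have fin: "finite (?f ` {..<K})" and ne: "?f ` {..<K} \<noteq> {}" using assms by auto
  obtain i where i: "i < K" "?f i = Min (?f ` {..<K})"
    using Min_in[OF fin ne] by auto
  have P: "i < K \<and> (\<forall>j<K. ?f i \<le> ?f j)"
    using i Min_le[OF fin] by auto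
  have "next_arm K \<beta> \<theta> \<xi> \<eta> \<alpha> c h = (LEAST i. i < K \<and> (\<forall>j<K. ?f i \<le> ?f j))"
    using assms unfolding next_arm_def Let_def by simp
  then show ?thesis using LeastI[of "\<lambda>i. i < K \<and> (\<forall>j<K. ?f i \<le> ?f j)", OF P] by simp
qed

lemma next_arm_lt: "K > 0 \<Longrightarrow> next_arm K \<beta> \<theta> \<xi> \<eta> \<alpha> c h < K"
  using next_arm_min[of h] by (cases "length h < K") (auto simp: next_arm_def)

lemma next_arm_small: "length h < K \<Longrightarrow> next_arm K \<beta> \<theta> \<xi> \<eta> \<alpha> c h = length h"
  by (simp add: next_arm_def)

lemma TT_Suc: "TT i (Suc n) = TT i n + (if arm n = i then 1 else 0)"
  by (simp add: T_pulls_def cnt_snoc)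

lemma TT_sum: "K > 0 \<Longrightarrow> (\<Sum>i<K. TT i n) = n"
proof (induction n)
  case 0 then show ?case by (simp add: T_pulls_def cnt_def)
next
  case (Suc n)
  have "arm n < K" using Suc.prems next_arm_lt by blast
  then have "(\<Sum>i<K. (if arm n = i then 1 else 0)::nat) = 1"
    by (simp add: sum.delta)
  then show ?case using Suc by (simp add: TT_Suc sum.distrib)
qed

lemma TT_le: "TT i n \<le> n"
  unfolding T_pulls_def cnt_def using length_filter_le[of _ "HH n"] len_hist[of n] by metis

lemma TT_small: "n \<le> K \<Longrightarrow> TT i n = (if i < n then 1 else 0)"
proof (induction n)
  case 0 then show ?case by (simp add: T_pulls_def cnt_def)
next
  case (Suc n)
  have "arm n = n" using Suc.prems next_arm_small[of "HH n"] len_hist[of n] by simp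
  then show ?case using Suc by (auto simp: TT_Suc)
qed

lemma TT_mono: "m \<le> n \<Longrightarrow> TT i m \<le> TT i n"
  by (induction n rule: dec_induct) (auto simp: TT_Suc)

lemma TT_pos: "K \<le> n \<Longrightarrow> i < K \<Longrightarrow> 1 \<le> TT i n"
  using TT_mono[of K n i] TT_small[of K i] by simp

lemma TT_ivt: "TT i n > s0 \<Longrightarrow> \<exists>t<n. TT i t = s0 \<and> arm t = i"
proof (induction n)
  case 0 then show ?case by (simp add: T_pulls_def cnt_def)
next
  case (Suc n)
  show ?case
  proof (cases "TT i n > s0")
    case True then show ?thesis using Suc.IH by (meson less_Suc_eq)
  next
    case False then show ?thesis using Suc.prems by (auto simp: TT_Suc split: if_splits)
  qed
qed



lemma ucb_step:
  fixes mu :: "nat \<Rightarrow> real"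
  assumes K: "K > 0" and t: "K \<le> t" and i: "i < K" and j: "j < K" and arm: "arm t = i"
  defines "w \<equiv> \<theta> powr (1/\<xi>) * real (Suc t) powr (\<alpha>/\<xi>)"
  defines "s \<equiv> TT i t" and "s' \<equiv> TT j t"
  shows "real s' * rho_hat \<beta> c j s' - real s' * mu j > real s' powr \<eta> * w
       \<or> real s * rho_hat \<beta> c i s - real s * mu i < - (real s powr \<eta> * w)
       \<or> mu i - mu j \<le> 2 * (w / real s powr (1 - \<eta>))"
proof -
  have s1: "s \<ge> 1" and s'1: "s' \<ge> 1" unfolding s_def s'_def using TT_pos t i j by auto
  have lh: "length (HH t) = t" by (rule len_hist)
  have min: "idx (HH t) i \<le> idx (HH t) j"
    using next_arm_min[OF K, of "HH t"] lh t arm j by auto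
  have bi: "bonus \<theta> \<xi> \<eta> \<alpha> (length (HH t) + 1) s = w / real s powr (1 - \<eta>)"
    unfolding bonus_def w_def lh by simp
  have bj: "bonus \<theta> \<xi> \<eta> \<alpha> (length (HH t) + 1) s' = w / real s' powr (1 - \<eta>)"
    unfolding bonus_def w_def lh by simp
  have min': "rho_hat \<beta> c i s - w / real s powr (1 - \<eta>) \<le> rho_hat \<beta> c j s' - w / real s' powr (1 - \<eta>)"
    using min bi bj unfolding s_def s'_def T_pulls_def by simp
  have ms: "real s * (w / real s powr (1 - \<eta>)) = real s powr \<eta> * w" using s1 by (intro bonus_mul) auto
  have ms': "real s' * (w / real s' powr (1 - \<eta>)) = real s' powr \<eta> * w" using s'1 by (intro bonus_mul) auto
  show ?thesis
  proof (rule ccontr)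
    assume "\<not> ?thesis"
    then have A: "real s' * (rho_hat \<beta> c j s' - mu j) \<le> real s' * (w / real s' powr (1 - \<eta>))"
      and B: "real s * (- (w / real s powr (1 - \<eta>))) \<le> real s * (rho_hat \<beta> c i s - mu i)"
      and C: "mu i - mu j > 2 * (w / real s powr (1 - \<eta>))"
      using ms ms' by (auto simp: algebra_simps)
    have A': "rho_hat \<beta> c j s' - mu j \<le> w / real s' powr (1 - \<eta>)"
      by (rule mult_left_le_imp_le[OF A]) (use s'1 in simp)
    have B': "- (w / real s powr (1 - \<eta>)) \<le> rho_hat \<beta> c i s - mu i"
      by (rule mult_left_le_imp_le[OF B]) (use s1 in simp)
    from A' B' C min' show False by linarith
  qed
qed



lemma count_bound:
  fixes mu :: "nat \<Rightarrow> real"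
  assumes K: "K > 0" and i: "i < K" and j: "j < K" and ij: "i \<noteq> j" and s0: "s0 \<ge> 1"
    and \<theta>: "\<theta> > 0" and \<xi>: "\<xi> > 0" and \<alpha>: "\<alpha> \<ge> 0" and \<eta>: "\<eta> < 1"
    and \<Delta>: "mu i - mu j > 0"
    and big: "real s0 > (2 * \<theta> powr (1/\<xi>) / (mu i - mu j)) powr (1/(1-\<eta>)) * real n powr (\<alpha>/(\<xi>*(1-\<eta>)))"
    and T: "TT i n > s0"
  shows "(\<exists>s\<in>{1..n}. real s * rho_hat \<beta> c j s - real s * mu j
              \<ge> real s powr \<eta> * (\<theta> powr (1/\<xi>) * real (Suc s0) powr (\<alpha>/\<xi>)))
       \<or> real s0 * rho_hat \<beta> c i s0 - real s0 * mu i
              \<le> - (real s0 powr \<eta> * (\<theta> powr (1/\<xi>) * real (Suc s0) powr (\<alpha>/\<xi>)))"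
proof -
  obtain t where t: "t < n" "TT i t = s0" "arm t = i" using TT_ivt[OF T] by blast
  have tK: "K \<le> t"
  proof (rule ccontr)
    assume "\<not> K \<le> t"
    then have "t < K" by simp
    then have "arm t = t" using next_arm_small[of "HH t"] len_hist[of t] by simp
    moreover have "TT i t = (if i < t then 1 else 0)" using TT_small[of t i] \<open>t < K\<close> by simp
    ultimately show False using t s0 by simp
  qed
  have s0t: "s0 \<le> t" using TT_le[of i t] t by simp
  define D where "D = \<theta> powr (1/\<xi>)"
  have Dpos: "D > 0" unfolding D_def using \<theta> by simp
  define w where "w = D * real (Suc t) powr (\<alpha>/\<xi>)"
  define w0 where "w0 = D * real (Suc s0) powr (\<alpha>/\<xi>)"
  have ww0: "w0 \<le> w" unfolding w_def w0_def using Dpos s0t \<alpha> \<xi>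
    by (intro mult_left_mono powr_mono2) auto
  have w0pos: "w0 \<ge> 0" unfolding w0_def using Dpos by simp
  define s' where "s' = TT j t"
  have s'1: "1 \<le> s'" unfolding s'_def using TT_pos[OF tK j] .
  have s'n: "s' \<le> n" unfolding s'_def using TT_le[of j t] t by simp
  have cases: "real s' * rho_hat \<beta> c j s' - real s' * mu j > real s' powr \<eta> * w
       \<or> real s0 * rho_hat \<beta> c i s0 - real s0 * mu i < - (real s0 powr \<eta> * w)
       \<or> mu i - mu j \<le> 2 * (w / real s0 powr (1 - \<eta>))"
    using ucb_step[OF K tK i j t(3), of mu] unfolding s'_def w_def D_def t(2) by simp
  show ?thesis
  proof -
    { assume A: "real s' * rho_hat \<beta> c j s' - real s' * mu j > real s' powr \<eta> * w"
      have "real s' powr \<eta> * w0 \<le> real s' powr \<eta> * w" using ww0 by (intro mult_left_mono) auto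
      then have "real s' * rho_hat \<beta> c j s' - real s' * mu j
              \<ge> real s' powr \<eta> * (\<theta> powr (1/\<xi>) * real (Suc s0) powr (\<alpha>/\<xi>))"
        using A unfolding w0_def D_def by linarith
      then have ?thesis using s'1 s'n by (intro disjI1 bexI[of _ s']) auto }
    moreover
    { assume B: "real s0 * rho_hat \<beta> c i s0 - real s0 * mu i < - (real s0 powr \<eta> * w)"
      have "real s0 powr \<eta> * w0 \<le> real s0 powr \<eta> * w" using ww0 by (intro mult_left_mono) auto
      then have ?thesis using B unfolding w0_def D_def by (intro disjI2) linarith }
    moreover
    { assume C: "mu i - mu j \<le> 2 * (w / real s0 powr (1 - \<eta>))"
      have sp: "real s0 powr (1 - \<eta>) > 0" using s0 by simp
      have "real s0 powr (1 - \<eta>) \<le> (2 * D / (mu i - mu j)) * real (Suc t) powr (\<alpha>/\<xi>)"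
        using C sp \<Delta> unfolding w_def by (simp add: field_simps)
      then have "(real s0 powr (1 - \<eta>)) powr (1/(1-\<eta>))
          \<le> ((2 * D / (mu i - mu j)) * real (Suc t) powr (\<alpha>/\<xi>)) powr (1/(1-\<eta>))"
        using \<eta> by (intro powr_mono2) auto
      also have "(real s0 powr (1 - \<eta>)) powr (1/(1-\<eta>)) = real s0"
        using \<eta> s0 by (simp add: powr_powr)
      also have "((2 * D / (mu i - mu j)) * real (Suc t) powr (\<alpha>/\<xi>)) powr (1/(1-\<eta>))
          = (2 * D / (mu i - mu j)) powr (1/(1-\<eta>)) * real (Suc t) powr (\<alpha>/(\<xi>*(1-\<eta>)))"
        using Dpos \<Delta> by (subst powr_mult) (auto simp: powr_powr)
      also have "\<dots> \<le> (2 * D / (mu i - mu j)) powr (1/(1-\<eta>)) * real n powr (\<alpha>/(\<xi>*(1-\<eta>)))"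
        using t(1) \<alpha> \<xi> \<eta> by (intro mult_left_mono powr_mono2) auto
      finally have False using big unfolding D_def by simp }
    ultimately show ?thesis using cases by blast
  qed
qed


lemma decomp:
  assumes K: "K > 0" and j: "j < K" and n: "n \<ge> 1" and \<beta>: "\<beta> > 0"
    and b: "\<And>i t. 1 \<le> t \<Longrightarrow> \<bar>c i t\<bar> \<le> R"
    and small: "\<And>i. i < K \<Longrightarrow> i \<noteq> j \<Longrightarrow> TT i n \<le> s0"
  shows "\<bar>(real n * rho_bar K \<beta> \<theta> \<xi> \<eta> \<alpha> c n - real n * m) - (real n * rho_hat \<beta> c j n - real n * m)\<bar>
         \<le> real K * real s0 * (2 * R + 2 * \<bar>m\<bar> + exp (2 * \<beta> * R) / \<beta>)"
proof -
  let ?I = "{..<K} - {j}"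
  let ?M0 = "R + \<bar>m\<bar>" and ?L = "R + exp (2 * \<beta> * R) / \<beta> + \<bar>m\<bar>"
  let ?f = "\<lambda>i. real (TT i n) * rho_hat \<beta> c i (TT i n) - real (TT i n) * m"
  have sumT: "(\<Sum>i<K. real (TT i n)) = real n" using TT_sum[OF K, of n] by (metis of_nat_sum)
  have "real n * rho_bar K \<beta> \<theta> \<xi> \<eta> \<alpha> c n - real n * m = (\<Sum>i<K. real (TT i n) * rho_hat \<beta> c i (TT i n)) - (\<Sum>i<K. real (TT i n)) * m"
    unfolding rho_bar_def T_pulls_def[symmetric] sumT using n by simp
  also have "\<dots> = (\<Sum>i<K. ?f i)" by (simp add: sum_subtractf sum_distrib_right)
  also have "\<dots> = ?f j + (\<Sum>i\<in>?I. ?f i)" using j by (subst sum.remove[of _ j]) auto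
  finally have e1: "real n * rho_bar K \<beta> \<theta> \<xi> \<eta> \<alpha> c n - real n * m = ?f j + (\<Sum>i\<in>?I. ?f i)" .
  have sumI: "real n - real (TT j n) = (\<Sum>i\<in>?I. real (TT i n))"
    using sumT j by (subst (asm) sum.remove[of _ j]) auto
  have Rnn: "R \<ge> 0" using b[of 1 0] by simp
  have t1: "\<bar>\<Sum>i\<in>?I. ?f i\<bar> \<le> (\<Sum>i\<in>?I. real (TT i n) * ?M0)"
  proof -
    have "\<bar>\<Sum>i\<in>?I. ?f i\<bar> \<le> (\<Sum>i\<in>?I. \<bar>?f i\<bar>)" by (rule sum_abs)
    also have "\<dots> \<le> (\<Sum>i\<in>?I. real (TT i n) * ?M0)"
    proof (rule sum_mono)
      fix i assume "i \<in> ?I"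
      show "\<bar>?f i\<bar> \<le> real (TT i n) * ?M0"
      proof (cases "TT i n = 0")
        case True then show ?thesis by simp
      next
        case False
        then have "\<bar>rho_hat \<beta> c i (TT i n)\<bar> \<le> R" using rho_hat_bound[of c i R "TT i n" \<beta>] b \<beta> by simp
        then have "\<bar>rho_hat \<beta> c i (TT i n) - m\<bar> \<le> ?M0" by linarith
        moreover have "?f i = real (TT i n) * (rho_hat \<beta> c i (TT i n) - m)" by (simp add: algebra_simps)
        ultimately show ?thesis by (simp add: abs_mult mult_left_mono)
      qed
    qed
    finally show ?thesis .
  qed
  have t2: "\<bar>?f j - (real n * rho_hat \<beta> c j n - real n * m)\<bar> \<le> ?L * (real n - real (TT j n))"
    using F_lip[of c j R \<beta> "TT j n" n m] b \<beta> TT_le[of j n] by (simp add: abs_minus_commute)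
  have t3: "(\<Sum>i\<in>?I. real (TT i n)) \<le> real K * real s0"
  proof -
    have "(\<Sum>i\<in>?I. real (TT i n)) \<le> (\<Sum>i\<in>?I. real s0)" using small by (intro sum_mono) auto
    also have "\<dots> = real (card ?I) * real s0" by simp
    also have "\<dots> \<le> real K * real s0" using card_Diff1_le[of "{..<K}" j] by (intro mult_right_mono) auto
    finally show ?thesis .
  qed
  have "\<bar>(real n * rho_bar K \<beta> \<theta> \<xi> \<eta> \<alpha> c n - real n * m) - (real n * rho_hat \<beta> c j n - real n * m)\<bar>
      \<le> \<bar>\<Sum>i\<in>?I. ?f i\<bar> + \<bar>?f j - (real n * rho_hat \<beta> c j n - real n * m)\<bar>"
    unfolding e1 by linarith
  also have "\<dots> \<le> (\<Sum>i\<in>?I. real (TT i n)) * ?M0 + ?L * (\<Sum>i\<in>?I. real (TT i n))"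
    using t1 t2 sumI by (simp add: sum_distrib_right)
  also have "\<dots> = (\<Sum>i\<in>?I. real (TT i n)) * (2 * R + 2 * \<bar>m\<bar> + exp (2 * \<beta> * R) / \<beta>)"
    by (simp add: algebra_simps)
  also have "\<dots> \<le> real K * real s0 * (2 * R + 2 * \<bar>m\<bar> + exp (2 * \<beta> * R) / \<beta>)"
    using t3 Rnn \<beta> by (intro mult_right_mono) auto
  finally show ?thesis .
qed

end





lemma arith_help:
  fixes n P Z Y B K :: real
  assumes "n \<ge> 1" "P \<ge> n" "Z \<ge> Y" "Y > 0" "B \<ge> 0" "K \<ge> 0"
  shows "(n + K) * (B / (P * Z)) \<le> (1 + K) * B / Y"
proof -
  have Pp: "P > 0" "Z > 0" using assms by auto
  have "K * 1 \<le> K * P" using assms by (intro mult_left_mono) auto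
  then have "n + K \<le> (1 + K) * P" using assms by (simp add: algebra_simps)
  then have "(n + K) * (B / (P * Z)) \<le> (1 + K) * P * (B / (P * Z))"
    using assms Pp by (intro mult_right_mono) auto
  also have "\<dots> = (1 + K) * B / Z" using Pp by (simp add: field_simps)
  also have "\<dots> \<le> (1 + K) * B / Y" using assms Pp by (intro divide_left_mono mult_nonneg_nonneg mult_pos_pos) auto
  finally show ?thesis .
qed

locale bandit = prob_space M for M :: "'a measure" +
  fixes x :: "nat \<Rightarrow> nat \<Rightarrow> 'a \<Rightarrow> real"
    and K :: nat and R \<beta> \<theta> \<xi> \<eta> \<alpha> :: real and mu :: "nat \<Rightarrow> real" and istar :: nat
  assumes meas: "\<And>i t. x i t \<in> borel_measurable M"
    and bounded: "\<And>i t \<omega>. \<omega> \<in> space M \<Longrightarrow> \<bar>x i t \<omega>\<bar> \<le> R"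
    and \<beta>: "\<beta> > 0"
    and \<theta>: "\<theta> > 1" and \<xi>: "\<xi> > 1" and \<eta>1: "1/2 \<le> \<eta>" and \<eta>2: "\<eta> < 1"
    and \<alpha>: "\<alpha> > 2" and \<alpha>lo: "\<xi> * \<eta> * (1 - \<eta>) \<le> \<alpha>" and \<alpha>hi: "\<alpha> < \<xi> * (1 - \<eta>)"
    and conc_up: "\<And>i n z. i < K \<Longrightarrow> n \<ge> 1 \<Longrightarrow> z \<ge> 1 \<Longrightarrow>
       measure M {\<omega> \<in> space M. real n * rho_hat \<beta> (\<lambda>j t. x j t \<omega>) i n - real n * mu i
                               \<ge> real n powr \<eta> * z} \<le> \<theta> / z powr \<xi>"
    and conc_low: "\<And>i n z. i < K \<Longrightarrow> n \<ge> 1 \<Longrightarrow> z \<ge> 1 \<Longrightarrow>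
       measure M {\<omega> \<in> space M. real n * rho_hat \<beta> (\<lambda>j t. x j t \<omega>) i n - real n * mu i
                               \<le> - (real n powr \<eta> * z)} \<le> \<theta> / z powr \<xi>"
    and istar: "istar < K"
    and unique: "\<And>i. i < K \<Longrightarrow> i \<noteq> istar \<Longrightarrow> mu istar < mu i"
begin

lemmas meas'[measurable] = meas

lemma rh_meas[measurable]: "(\<lambda>\<omega>. rho_hat \<beta> (\<lambda>j t. x j t \<omega>) i n) \<in> borel_measurable M"
  unfolding rho_hat_def by measurable

lemma Kpos: "K > 0" using istar by simp

lemma Rnn: "R \<ge> 0"
proof -
  obtain \<omega> where "\<omega> \<in> space M" using not_empty by blast
  then show ?thesis using bounded[of \<omega> 0 0] by simp
qed

definition "etap = \<alpha> / (\<xi> * (1 - \<eta>))"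

lemma etap: "\<eta> \<le> etap" "etap < 1" "etap * \<alpha> \<ge> 1" "etap > 0"
proof -
  have p: "\<xi> * (1 - \<eta>) > 0" using \<xi> \<eta>2 by simp
  show "\<eta> \<le> etap" unfolding etap_def using \<alpha>lo p by (simp add: field_simps)
  show "etap < 1" unfolding etap_def using \<alpha>hi p by (simp add: field_simps)
  show "etap > 0" unfolding etap_def using \<alpha> p by simp
  have "etap * \<alpha> \<ge> (1/2) * 2" using \<open>\<eta> \<le> etap\<close> \<eta>1 \<alpha> by (intro mult_mono) auto
  then show "etap * \<alpha> \<ge> 1" by simp
qed

lemma tail:
  "\<exists>\<theta>'>1. \<forall>n z. n \<ge> 1 \<longrightarrow> z \<ge> 1 \<longrightarrow>
         measure M {\<omega> \<in> space M. real n * rho_bar K \<beta> \<theta> \<xi> \<eta> \<alpha> (\<lambda>j t. x j t \<omega>) n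
              - real n * mu istar \<ge> real n powr (\<alpha> / (\<xi> * (1 - \<eta>))) * z}
           \<le> \<theta>' / z powr (\<alpha> - 1)
       \<and> measure M {\<omega> \<in> space M. real n * rho_bar K \<beta> \<theta> \<xi> \<eta> \<alpha> (\<lambda>j t. x j t \<omega>) n
              - real n * mu istar \<le> - (real n powr (\<alpha> / (\<xi> * (1 - \<eta>))) * z)}
           \<le> \<theta>' / z powr (\<alpha> - 1)"
proof -
  define D where "D = \<theta> powr (1/\<xi>)"
  have D1: "D \<ge> 1" unfolding D_def using \<theta> \<xi> by (intro ge_one_powr_ge_zero) auto
  have Dxi: "D powr \<xi> = \<theta>" unfolding D_def using \<theta> \<xi> by (simp add: powr_powr)
  define c0 where "c0 = (\<Sum>i\<in>{..<K}-{istar}. (2 * D / (mu i - mu istar)) powr (1/(1-\<eta>)))"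
  have c0nn: "c0 \<ge> 0" unfolding c0_def by (intro sum_nonneg) auto
  have c0i: "(2 * D / (mu i - mu istar)) powr (1/(1-\<eta>)) \<le> c0" if "i < K" "i \<noteq> istar" for i
    unfolding c0_def using that by (intro member_le_sum) auto
  define M0 where "M0 = 2 * R + 2 * \<bar>mu istar\<bar> + exp (2 * \<beta> * R) / \<beta> + 1"
  have M01: "M0 \<ge> 1" unfolding M0_def using Rnn \<beta> by (simp add: add_nonneg_nonneg)
  have K1: "real K \<ge> 1" using Kpos by simp
  define z0 where "z0 = 2 * real K * M0 * (c0 + 2)"
  have z0_2: "z0 \<ge> 2"
  proof -
    have "2 * 1 * 1 * (0 + 1) \<le> 2 * real K * M0 * (c0 + 2)" using K1 M01 c0nn
      by (intro mult_mono) auto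
    then show ?thesis unfolding z0_def by simp
  qed
  define C1 where "C1 = \<theta> * 2 powr \<xi> + (1 + real K) * (2 * real K * M0) powr \<alpha>"
  define th where "th = max 2 (max (z0 powr (\<alpha> - 1)) C1)"
  have th1: "th > 1" unfolding th_def by simp
  have main: "measure M {\<omega> \<in> space M. real n * rho_bar K \<beta> \<theta> \<xi> \<eta> \<alpha> (\<lambda>j t. x j t \<omega>) n
              - real n * mu istar \<ge> real n powr etap * z} \<le> C1 / z powr (\<alpha> - 1)
       \<and> measure M {\<omega> \<in> space M. real n * rho_bar K \<beta> \<theta> \<xi> \<eta> \<alpha> (\<lambda>j t. x j t \<omega>) n
              - real n * mu istar \<le> - (real n powr etap * z)} \<le> C1 / z powr (\<alpha> - 1)"
    if n: "n \<ge> 1" and z: "z \<ge> z0" for n z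
  proof -
    have npow: "real n powr etap \<ge> 1" using n etap by (intro ge_one_powr_ge_zero) auto
    have zpos: "z \<ge> 2" using z z0_2 by simp
    define A where "A = real n powr etap * z"
    have KM: "2 * real K * M0 > 0" using K1 M01 by simp
    define s0 where "s0 = nat \<lfloor>A / (2 * real K * M0)\<rfloor>"
    have Apos: "A / (2 * real K * M0) \<ge> 0" unfolding A_def using KM npow zpos by simp
    have s0_le: "real s0 \<le> A / (2 * real K * M0)" unfolding s0_def using Apos by linarith
    have s0_gt: "A / (2 * real K * M0) < real s0 + 1" unfolding s0_def using Apos by linarith
    have "A / (2 * real K * M0) \<ge> real n powr etap * (c0 + 2)"
    proof -
      have "real n powr etap * z0 \<le> real n powr etap * z" using z npow by (intro mult_left_mono) auto
      then show ?thesis unfolding A_def z0_def using KM by (simp add: field_simps)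
    qed
    then have s0big1: "real s0 > c0 * real n powr etap + 1"
      using s0_gt npow by (simp add: algebra_simps)
    then have s0big: "real s0 > c0 * real n powr etap" by simp
    have s01: "s0 \<ge> 1"
    proof -
      have "c0 * real n powr etap \<ge> 0" using c0nn npow by simp
      then have "real s0 > 1" using s0big1 by linarith
      then show ?thesis by simp
    qed
    define w0 where "w0 = D * real (Suc s0) powr (\<alpha>/\<xi>)"
    have w01: "w0 \<ge> 1"
    proof -
      have "real (Suc s0) powr (\<alpha>/\<xi>) \<ge> 1" using \<alpha> \<xi> by (intro ge_one_powr_ge_zero) auto
      then have "1 * 1 \<le> D * real (Suc s0) powr (\<alpha>/\<xi>)" using D1 by (intro mult_mono) auto
      then show ?thesis unfolding w0_def by simp
    qed
    have w0xi: "w0 powr \<xi> = \<theta> * real (Suc s0) powr \<alpha>"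
      unfolding w0_def using D1 \<xi> by (simp add: powr_mult powr_powr Dxi)
    define EA where "EA s = {\<omega> \<in> space M. real s * rho_hat \<beta> (\<lambda>j t. x j t \<omega>) istar s - real s * mu istar
                               \<ge> real s powr \<eta> * w0}" for s
    define EB where "EB i = {\<omega> \<in> space M. real s0 * rho_hat \<beta> (\<lambda>j t. x j t \<omega>) i s0 - real s0 * mu i
                               \<le> - (real s0 powr \<eta> * w0)}" for i
    define Bad where "Bad = (\<Union>s\<in>{1..n}. EA s) \<union> (\<Union>i\<in>{..<K}. EB i)"
    have EA_sets: "EA s \<in> sets M" for s unfolding EA_def by measurable
    have EB_sets: "EB i \<in> sets M" for i unfolding EB_def by measurable
    have Bad_sets: "Bad \<in> sets M" unfolding Bad_def using EA_sets EB_sets by auto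
    define z1 where "z1 = z * real n powr (etap - \<eta>) / 2"
    have z1: "z1 \<ge> z / 2"
    proof -
      have "real n powr (etap - \<eta>) \<ge> 1" using n etap by (intro ge_one_powr_ge_zero) auto
      then have "z * 1 \<le> z * real n powr (etap - \<eta>)" using zpos by (intro mult_left_mono) auto
      then show ?thesis unfolding z1_def by simp
    qed
    have z11: "z1 \<ge> 1" using z1 zpos by simp
    have Ahalf: "A / 2 = real n powr \<eta> * z1"
      unfolding A_def z1_def using n by (simp add: powr_add[symmetric])
    define Eup where "Eup = {\<omega> \<in> space M. real n * rho_hat \<beta> (\<lambda>j t. x j t \<omega>) istar n - real n * mu istar
                               \<ge> real n powr \<eta> * z1}"
    define Elo where "Elo = {\<omega> \<in> space M. real n * rho_hat \<beta> (\<lambda>j t. x j t \<omega>) istar n - real n * mu istar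
                               \<le> - (real n powr \<eta> * z1)}"
    have Eup_sets: "Eup \<in> sets M" unfolding Eup_def by measurable
    have Elo_sets: "Elo \<in> sets M" unfolding Elo_def by measurable
    have close: "\<bar>(real n * rho_bar K \<beta> \<theta> \<xi> \<eta> \<alpha> (\<lambda>j t. x j t \<omega>) n - real n * mu istar)
                  - (real n * rho_hat \<beta> (\<lambda>j t. x j t \<omega>) istar n - real n * mu istar)\<bar> \<le> A / 2"
      if \<omega>: "\<omega> \<in> space M" "\<omega> \<notin> Bad" for \<omega>
    proof -
      let ?c = "\<lambda>j t. x j t \<omega>"
      have bnd: "\<And>i t. 1 \<le> t \<Longrightarrow> \<bar>?c i t\<bar> \<le> R" using bounded \<omega> by simp
      have smallT: "T_pulls K \<beta> \<theta> \<xi> \<eta> \<alpha> ?c i n \<le> s0" if i: "i < K" "i \<noteq> istar" for i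
      proof (rule ccontr)
        assume "\<not> ?thesis"
        then have T: "T_pulls K \<beta> \<theta> \<xi> \<eta> \<alpha> ?c i n > s0" by simp
        have big: "real s0 > (2 * \<theta> powr (1/\<xi>) / (mu i - mu istar)) powr (1/(1-\<eta>)) * real n powr (\<alpha>/(\<xi>*(1-\<eta>)))"
        proof -
          have "(2 * \<theta> powr (1/\<xi>) / (mu i - mu istar)) powr (1/(1-\<eta>)) * real n powr (\<alpha>/(\<xi>*(1-\<eta>)))
              \<le> c0 * real n powr etap"
            using c0i[OF i] unfolding D_def etap_def by (intro mult_right_mono) auto
          then show ?thesis using s0big by linarith
        qed
        have "(\<exists>s\<in>{1..n}. real s * rho_hat \<beta> ?c istar s - real s * mu istar
              \<ge> real s powr \<eta> * (\<theta> powr (1/\<xi>) * real (Suc s0) powr (\<alpha>/\<xi>)))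
         \<or> real s0 * rho_hat \<beta> ?c i s0 - real s0 * mu i
              \<le> - (real s0 powr \<eta> * (\<theta> powr (1/\<xi>) * real (Suc s0) powr (\<alpha>/\<xi>)))"
        proof (rule count_bound[OF Kpos i(1) istar i(2) s01 _ _ _ \<eta>2 _ big T])
          show "0 < \<theta>" "0 < \<xi>" "0 \<le> \<alpha>" using \<theta> \<xi> \<alpha> by auto
          show "0 < mu i - mu istar" using unique[OF i] by simp
        qed
        then have "\<omega> \<in> Bad" unfolding Bad_def EA_def EB_def w0_def D_def using \<omega>(1) i by auto
        then show False using \<omega> by simp
      qed
      have "\<bar>(real n * rho_bar K \<beta> \<theta> \<xi> \<eta> \<alpha> ?c n - real n * mu istar)
                  - (real n * rho_hat \<beta> ?c istar n - real n * mu istar)\<bar>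
            \<le> real K * real s0 * (2 * R + 2 * \<bar>mu istar\<bar> + exp (2 * \<beta> * R) / \<beta>)"
        by (rule decomp[OF Kpos istar n \<beta> bnd smallT])
      also have "\<dots> \<le> real K * real s0 * M0" unfolding M0_def by (intro mult_left_mono) auto
      also have "\<dots> \<le> real K * (A / (2 * real K * M0)) * M0" using s0_le K1 M01 by (intro mult_right_mono mult_left_mono) auto
      also have "\<dots> = A / 2" using K1 M01 by (simp add: field_simps)
      finally show ?thesis .
    qed
    have inclU: "{\<omega> \<in> space M. real n * rho_bar K \<beta> \<theta> \<xi> \<eta> \<alpha> (\<lambda>j t. x j t \<omega>) n
              - real n * mu istar \<ge> real n powr etap * z} \<subseteq> Eup \<union> Bad"
    proof
      fix \<omega> assume "\<omega> \<in> {\<omega> \<in> space M. real n * rho_bar K \<beta> \<theta> \<xi> \<eta> \<alpha> (\<lambda>j t. x j t \<omega>) n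
              - real n * mu istar \<ge> real n powr etap * z}"
      then have \<omega>: "\<omega> \<in> space M" and Y: "real n * rho_bar K \<beta> \<theta> \<xi> \<eta> \<alpha> (\<lambda>j t. x j t \<omega>) n
              - real n * mu istar \<ge> A" unfolding A_def by auto
      show "\<omega> \<in> Eup \<union> Bad"
      proof (cases "\<omega> \<in> Bad")
        case False
        from close[OF \<omega> False] Y Ahalf have "real n * rho_hat \<beta> (\<lambda>j t. x j t \<omega>) istar n - real n * mu istar
              \<ge> real n powr \<eta> * z1" by (simp add: abs_le_iff)
        then show ?thesis unfolding Eup_def using \<omega> by simp
      qed simp
    qed
    have inclL: "{\<omega> \<in> space M. real n * rho_bar K \<beta> \<theta> \<xi> \<eta> \<alpha> (\<lambda>j t. x j t \<omega>) n
              - real n * mu istar \<le> - (real n powr etap * z)} \<subseteq> Elo \<union> Bad"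
    proof
      fix \<omega> assume "\<omega> \<in> {\<omega> \<in> space M. real n * rho_bar K \<beta> \<theta> \<xi> \<eta> \<alpha> (\<lambda>j t. x j t \<omega>) n
              - real n * mu istar \<le> - (real n powr etap * z)}"
      then have \<omega>: "\<omega> \<in> space M" and Y: "real n * rho_bar K \<beta> \<theta> \<xi> \<eta> \<alpha> (\<lambda>j t. x j t \<omega>) n
              - real n * mu istar \<le> - A" unfolding A_def by auto
      show "\<omega> \<in> Elo \<union> Bad"
      proof (cases "\<omega> \<in> Bad")
        case False
        from close[OF \<omega> False] Y Ahalf have "real n * rho_hat \<beta> (\<lambda>j t. x j t \<omega>) istar n - real n * mu istar
              \<le> - (real n powr \<eta> * z1)" by (simp add: abs_le_iff)
        then show ?thesis unfolding Elo_def using \<omega> by simp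
      qed simp
    qed
    have z2: "(z / 2) powr \<xi> \<le> z1 powr \<xi>" using z1 zpos \<xi> by (intro powr_mono2) auto
    have z2': "(z / 2) powr \<xi> = z powr \<xi> / 2 powr \<xi>" using zpos by (simp add: powr_divide)
    have zpxi: "z powr \<xi> > 0" using zpos by simp
    have PE: "\<theta> / z1 powr \<xi> \<le> \<theta> * 2 powr \<xi> / z powr \<xi>"
    proof -
      have "\<theta> / z1 powr \<xi> \<le> \<theta> / (z / 2) powr \<xi>" using z2 \<theta> zpos z11 by (intro divide_left_mono) auto
      also have "\<dots> = \<theta> * 2 powr \<xi> / z powr \<xi>" unfolding z2' by simp
      finally show ?thesis .
    qed
    have PEup: "measure M Eup \<le> \<theta> * 2 powr \<xi> / z powr \<xi>"
      using conc_up[OF istar n z11] PE unfolding Eup_def by linarith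
    have PElo: "measure M Elo \<le> \<theta> * 2 powr \<xi> / z powr \<xi>"
      using conc_low[OF istar n z11] PE unfolding Elo_def by linarith
    have w0q: "\<theta> / w0 powr \<xi> = 1 / real (Suc s0) powr \<alpha>" unfolding w0xi using \<theta> by simp
    have PEA: "measure M (EA s) \<le> 1 / real (Suc s0) powr \<alpha>" if "s \<in> {1..n}" for s
      using conc_up[OF istar _ w01, of s] that w0q unfolding EA_def by auto
    have PEB: "measure M (EB i) \<le> 1 / real (Suc s0) powr \<alpha>" if "i \<in> {..<K}" for i
      using conc_low[OF _ s01 w01, of i] that w0q unfolding EB_def by auto
    have PBad: "measure M Bad \<le> (real n + real K) * (1 / real (Suc s0) powr \<alpha>)"
    proof -
      have "measure M Bad \<le> measure M (\<Union>s\<in>{1..n}. EA s) + measure M (\<Union>i\<in>{..<K}. EB i)"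
        unfolding Bad_def using EA_sets EB_sets by (intro measure_subadditive) (auto simp: emeasure_finite)
      also have "\<dots> \<le> (\<Sum>s\<in>{1..n}. measure M (EA s)) + (\<Sum>i\<in>{..<K}. measure M (EB i))"
        using EA_sets EB_sets by (intro add_mono finite_measure_subadditive_finite) auto
      also have "\<dots> \<le> (\<Sum>s\<in>{1..n}. 1 / real (Suc s0) powr \<alpha>) + (\<Sum>i\<in>{..<K}. 1 / real (Suc s0) powr \<alpha>)"
        using PEA PEB by (intro add_mono sum_mono) auto
      also have "\<dots> = (real n + real K) * (1 / real (Suc s0) powr \<alpha>)" by (simp add: algebra_simps add_divide_distrib)
      finally show ?thesis .
    qed
    have arith: "\<theta> * 2 powr \<xi> / z powr \<xi> + (real n + real K) * (1 / real (Suc s0) powr \<alpha>) \<le> C1 / z powr (\<alpha> - 1)"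
    proof -
      have "\<xi> * \<eta> \<ge> 0" using \<xi> \<eta>1 by simp
      then have "\<alpha> - 1 \<le> \<xi>" using \<alpha>hi by (simp add: algebra_simps)
      then have zz: "z powr (\<alpha> - 1) \<le> z powr \<xi>" using zpos by (intro powr_mono) auto
      have zz': "z powr (\<alpha> - 1) \<le> z powr \<alpha>" using zpos by (intro powr_mono) auto
      have zpos': "z powr (\<alpha> - 1) > 0" using zpos by simp
      have a1: "\<theta> * 2 powr \<xi> / z powr \<xi> \<le> \<theta> * 2 powr \<xi> / z powr (\<alpha> - 1)"
        using zz zpos' \<theta> by (intro divide_left_mono) auto
      have "(A / (2 * real K * M0)) powr \<alpha> \<le> real (Suc s0) powr \<alpha>"
        using s0_gt Apos \<alpha> by (intro powr_mono2) auto
      moreover have "(A / (2 * real K * M0)) powr \<alpha> = real n powr (etap * \<alpha>) * z powr \<alpha> / (2 * real K * M0) powr \<alpha>"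
        unfolding A_def using zpos KM by (simp add: powr_divide powr_mult powr_powr)
      ultimately have "1 / real (Suc s0) powr \<alpha> \<le> 1 / (real n powr (etap * \<alpha>) * z powr \<alpha> / (2 * real K * M0) powr \<alpha>)"
      proof (intro divide_left_mono)
        have "real n powr (etap * \<alpha>) > 0" "z powr \<alpha> > 0" "(2 * real K * M0) powr \<alpha> > 0"
          using n zpos KM Kpos by auto
        then have "real n powr (etap * \<alpha>) * z powr \<alpha> / (2 * real K * M0) powr \<alpha> > 0" by simp
        moreover have "real (Suc s0) powr \<alpha> > 0" by simp
        ultimately show "0 < real (Suc s0) powr \<alpha> * (real n powr (etap * \<alpha>) * z powr \<alpha> / (2 * real K * M0) powr \<alpha>)"
          by (rule mult_pos_pos[rotated])
      qed auto
      also have "\<dots> = (2 * real K * M0) powr \<alpha> / (real n powr (etap * \<alpha>) * z powr \<alpha>)" by simp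
      finally have q: "1 / real (Suc s0) powr \<alpha> \<le> (2 * real K * M0) powr \<alpha> / (real n powr (etap * \<alpha>) * z powr \<alpha>)" .
      have nP: "real n \<le> real n powr (etap * \<alpha>)"
        using powr_mono[of 1 "etap * \<alpha>" "real n"] etap n by simp
      have "(real n + real K) * (1 / real (Suc s0) powr \<alpha>)
          \<le> (real n + real K) * ((2 * real K * M0) powr \<alpha> / (real n powr (etap * \<alpha>) * z powr \<alpha>))"
        using q by (intro mult_left_mono) auto
      also have "\<dots> \<le> (1 + real K) * (2 * real K * M0) powr \<alpha> / z powr (\<alpha> - 1)"
        using n nP zz' zpos' by (intro arith_help) auto
      finally have a2: "(real n + real K) * (1 / real (Suc s0) powr \<alpha>) \<le> (1 + real K) * (2 * real K * M0) powr \<alpha> / z powr (\<alpha> - 1)" .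
      show ?thesis using a1 a2 unfolding C1_def by (simp add: add_divide_distrib)
    qed
    have "measure M {\<omega> \<in> space M. real n * rho_bar K \<beta> \<theta> \<xi> \<eta> \<alpha> (\<lambda>j t. x j t \<omega>) n
              - real n * mu istar \<ge> real n powr etap * z} \<le> measure M (Eup \<union> Bad)"
      using inclU Eup_sets Bad_sets by (intro finite_measure_mono) auto
    also have "\<dots> \<le> measure M Eup + measure M Bad"
      using Eup_sets Bad_sets by (intro measure_subadditive) (auto simp: emeasure_finite)
    finally have U: "measure M {\<omega> \<in> space M. real n * rho_bar K \<beta> \<theta> \<xi> \<eta> \<alpha> (\<lambda>j t. x j t \<omega>) n
              - real n * mu istar \<ge> real n powr etap * z} \<le> C1 / z powr (\<alpha> - 1)"
      using PEup PBad arith by linarith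
    have "measure M {\<omega> \<in> space M. real n * rho_bar K \<beta> \<theta> \<xi> \<eta> \<alpha> (\<lambda>j t. x j t \<omega>) n
              - real n * mu istar \<le> - (real n powr etap * z)} \<le> measure M (Elo \<union> Bad)"
      using inclL Elo_sets Bad_sets by (intro finite_measure_mono) auto
    also have "\<dots> \<le> measure M Elo + measure M Bad"
      using Elo_sets Bad_sets by (intro measure_subadditive) (auto simp: emeasure_finite)
    finally have L: "measure M {\<omega> \<in> space M. real n * rho_bar K \<beta> \<theta> \<xi> \<eta> \<alpha> (\<lambda>j t. x j t \<omega>) n
              - real n * mu istar \<le> - (real n powr etap * z)} \<le> C1 / z powr (\<alpha> - 1)"
      using PElo PBad arith by linarith
    show ?thesis using U L by simp
  qed
  have small: "measure M S \<le> th / z powr (\<alpha> - 1)" if "1 \<le> z" "z < z0" for S z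
  proof -
    have "z powr (\<alpha> - 1) \<le> z0 powr (\<alpha> - 1)" using that \<alpha> by (intro powr_mono2) auto
    also have "\<dots> \<le> th" unfolding th_def by simp
    finally have "1 \<le> th / z powr (\<alpha> - 1)" using that by simp
    then show ?thesis using prob_le_1[of S] by linarith
  qed
  have C1th: "C1 / z powr (\<alpha> - 1) \<le> th / z powr (\<alpha> - 1)" if "z \<ge> 1" for z
    using that unfolding th_def by (intro divide_right_mono) auto
  show ?thesis
  proof (intro exI[of _ th] conjI th1 allI impI)
    fix n :: nat and z :: real assume n: "1 \<le> n" and z: "1 \<le> z"
    show "measure M {\<omega> \<in> space M. real n * rho_bar K \<beta> \<theta> \<xi> \<eta> \<alpha> (\<lambda>j t. x j t \<omega>) n
              - real n * mu istar \<ge> real n powr (\<alpha> / (\<xi> * (1 - \<eta>))) * z} \<le> th / z powr (\<alpha> - 1)"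
    proof (cases "z < z0")
      case True then show ?thesis using small z by blast
    next
      case False then show ?thesis using main[OF n, of z] C1th[OF z] unfolding etap_def by auto
    qed
    show "measure M {\<omega> \<in> space M. real n * rho_bar K \<beta> \<theta> \<xi> \<eta> \<alpha> (\<lambda>j t. x j t \<omega>) n
              - real n * mu istar \<le> - (real n powr (\<alpha> / (\<xi> * (1 - \<eta>))) * z)} \<le> th / z powr (\<alpha> - 1)"
    proof (cases "z < z0")
      case True then show ?thesis using small z by blast
    next
      case False then show ?thesis using main[OF n, of z] C1th[OF z] unfolding etap_def by auto
    qed
  qed
qed

end


context bandit begin

lemma next_arm_meas: "(\<lambda>\<omega>. next_arm K \<beta> \<theta> \<xi> \<eta> \<alpha> (\<lambda>j t. x j t \<omega>) h) \<in> measurable M (count_space UNIV)"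
proof (cases "length h < K")
  case True then show ?thesis unfolding next_arm_def by simp
next
  case False
  define F where "F \<omega> i = rho_hat \<beta> (\<lambda>j t. x j t \<omega>) i (cnt h i) - bonus \<theta> \<xi> \<eta> \<alpha> (length h + 1) (cnt h i)" for \<omega> i
  have Fm[measurable]: "(\<lambda>\<omega>. F \<omega> i) \<in> borel_measurable M" for i unfolding F_def by measurable
  have P: "(\<lambda>\<omega>. i < K \<and> (\<forall>j<K. F \<omega> i \<le> F \<omega> j)) \<in> measurable M (count_space UNIV)" for i
    by measurable
  have "(\<lambda>\<omega>. LEAST i. i < K \<and> (\<forall>j<K. F \<omega> i \<le> F \<omega> j)) \<in> measurable M (count_space UNIV)"
    by (rule measurable_Least[OF P])
  moreover have "(\<lambda>\<omega>. next_arm K \<beta> \<theta> \<xi> \<eta> \<alpha> (\<lambda>j t. x j t \<omega>) h) = (\<lambda>\<omega>. LEAST i. i < K \<and> (\<forall>j<K. F \<omega> i \<le> F \<omega> j))"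
    using False unfolding next_arm_def Let_def F_def by simp
  ultimately show ?thesis by simp
qed

lemma hist_meas: "(\<lambda>\<omega>. hist K \<beta> \<theta> \<xi> \<eta> \<alpha> (\<lambda>j t. x j t \<omega>) n) \<in> measurable M (count_space UNIV)"
proof (induction n)
  case 0 then show ?case by simp
next
  case (Suc n)
  have "(\<lambda>\<omega>. (\<lambda>h \<omega>. h @ [next_arm K \<beta> \<theta> \<xi> \<eta> \<alpha> (\<lambda>j t. x j t \<omega>) h])
             (hist K \<beta> \<theta> \<xi> \<eta> \<alpha> (\<lambda>j t. x j t \<omega>) n) \<omega>) \<in> measurable M (count_space UNIV)"
  proof (rule measurable_compose_countable[OF _ Suc.IH])
    fix h :: "nat list"
    show "(\<lambda>\<omega>. h @ [next_arm K \<beta> \<theta> \<xi> \<eta> \<alpha> (\<lambda>j t. x j t \<omega>) h]) \<in> measurable M (count_space UNIV)"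
      using measurable_compose[OF next_arm_meas[of h], of "\<lambda>a. h @ [a]" "count_space UNIV"] by simp
  qed
  then show ?case by simp
qed

lemma rho_bar_meas: "(\<lambda>\<omega>. rho_bar K \<beta> \<theta> \<xi> \<eta> \<alpha> (\<lambda>j t. x j t \<omega>) n) \<in> borel_measurable M"
proof -
  have "(\<lambda>\<omega>. (\<lambda>h \<omega>. (1 / real n) * (\<Sum>i<K. real (cnt h i) * rho_hat \<beta> (\<lambda>j t. x j t \<omega>) i (cnt h i)))
             (hist K \<beta> \<theta> \<xi> \<eta> \<alpha> (\<lambda>j t. x j t \<omega>) n) \<omega>) \<in> borel_measurable M"
    by (rule measurable_compose_countable[OF _ hist_meas]) (intro borel_measurable_times borel_measurable_const borel_measurable_sum rh_meas)
  then show ?thesis unfolding rho_bar_def T_pulls_def by simp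
qed

end



lemma layer:
  fixes y B :: real
  assumes B: "0 < B" and y: "0 \<le> y" and N: "y \<le> real N * B"
  shows "y \<le> B * (1 + (\<Sum>k\<in>{1..N}. if real k * B \<le> y then 1 else 0))"
proof -
  define m where "m = nat \<lfloor>y / B\<rfloor>"
  have yB: "y / B \<ge> 0" using B y by simp
  have m1: "real m \<le> y / B" unfolding m_def using yB by linarith
  have m2: "y / B < real m + 1" unfolding m_def using yB by linarith
  have "y / B \<le> real N" using N B by (simp add: field_simps)
  then have mN: "m \<le> N" using m1 unfolding m_def by linarith
  have "real m = (\<Sum>k\<in>{1..m}. (if real k * B \<le> y then 1 else 0 :: real))"
  proof -
    have "\<forall>k\<in>{1..m}. real k * B \<le> y"
    proof
      fix k assume "k \<in> {1..m}"
      then have "real k \<le> real m" by simp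
      then have "real k * B \<le> real m * B" using B by (intro mult_right_mono) auto
      also have "\<dots> \<le> y" using m1 B by (simp add: field_simps)
      finally show "real k * B \<le> y" .
    qed
    then show ?thesis by simp
  qed
  also have "\<dots> \<le> (\<Sum>k\<in>{1..N}. (if real k * B \<le> y then 1 else 0 :: real))"
    using mN by (intro sum_mono2) auto
  finally have "real m \<le> (\<Sum>k\<in>{1..N}. (if real k * B \<le> y then 1 else 0 :: real))" .
  moreover have "y < B * (real m + 1)" using m2 B by (simp add: field_simps)
  ultimately show ?thesis using B by (smt (verit) mult_left_mono)
qed
context bandit begin

lemma rb_bound:
  assumes "\<omega> \<in> space M"
  shows "\<bar>rho_bar K \<beta> \<theta> \<xi> \<eta> \<alpha> (\<lambda>j t. x j t \<omega>) n\<bar> \<le> R"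
proof (cases "n = 0")
  case True then show ?thesis using Rnn by (simp add: rho_bar_def)
next
  case False
  let ?c = "\<lambda>j t. x j t \<omega>"
  let ?T = "\<lambda>i. T_pulls K \<beta> \<theta> \<xi> \<eta> \<alpha> ?c i n"
  have each: "\<bar>real (?T i) * rho_hat \<beta> ?c i (?T i)\<bar> \<le> real (?T i) * R" for i
  proof (cases "?T i = 0")
    case True then show ?thesis by simp
  next
    case False
    then have "\<bar>rho_hat \<beta> ?c i (?T i)\<bar> \<le> R"
      using rho_hat_bound[of ?c i R "?T i" \<beta>] bounded assms \<beta> by simp
    then show ?thesis by (simp add: abs_mult mult_left_mono)
  qed
  have "\<bar>\<Sum>i<K. real (?T i) * rho_hat \<beta> ?c i (?T i)\<bar> \<le> (\<Sum>i<K. real (?T i) * R)"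
    by (rule order_trans[OF sum_abs sum_mono]) (rule each)
  also have "\<dots> = real n * R" using TT_sum[OF Kpos, of \<beta> \<theta> \<xi> \<eta> \<alpha> ?c n]
    by (simp add: sum_distrib_right[symmetric]) (metis of_nat_sum)
  finally have "\<bar>\<Sum>i<K. real (?T i) * rho_hat \<beta> ?c i (?T i)\<bar> \<le> real n * R" .
  then show ?thesis using False unfolding rho_bar_def by (simp add: abs_mult field_simps)
qed

lemma exp_bound:
  "\<exists>C. \<forall>n\<ge>1. \<bar>mu istar - expectation (\<lambda>\<omega>. rho_bar K \<beta> \<theta> \<xi> \<eta> \<alpha> (\<lambda>j t. x j t \<omega>) n)\<bar>
            \<le> C * real n powr (etap - 1)"
proof -
  obtain th where th1: "th > 1" and TB: "\<forall>n z. n \<ge> 1 \<longrightarrow> z \<ge> 1 \<longrightarrow>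
         measure M {\<omega> \<in> space M. real n * rho_bar K \<beta> \<theta> \<xi> \<eta> \<alpha> (\<lambda>j t. x j t \<omega>) n
              - real n * mu istar \<ge> real n powr etap * z}
           \<le> th / z powr (\<alpha> - 1)
       \<and> measure M {\<omega> \<in> space M. real n * rho_bar K \<beta> \<theta> \<xi> \<eta> \<alpha> (\<lambda>j t. x j t \<omega>) n
              - real n * mu istar \<le> - (real n powr etap * z)}
           \<le> th / z powr (\<alpha> - 1)"
    using tail unfolding etap_def by blast
  define S where "S = suminf (\<lambda>k::nat. real k powr (1 - \<alpha>))"
  have summ: "summable (\<lambda>k::nat. real k powr (1 - \<alpha>))" using \<alpha> by (subst summable_real_powr_iff) auto
  define C where "C = 1 + 2 * th * S"
  show ?thesis
  proof (intro exI[of _ C] allI impI)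
    fix n :: nat assume n: "1 \<le> n"
    define B where "B = real n powr etap"
    have B1: "B \<ge> 1" unfolding B_def using n etap by (intro ge_one_powr_ge_zero) auto
    then have Bpos: "B > 0" by simp
    define Y where "Y \<omega> = real n * rho_bar K \<beta> \<theta> \<xi> \<eta> \<alpha> (\<lambda>j t. x j t \<omega>) n - real n * mu istar" for \<omega>
    have rbm: "(\<lambda>\<omega>. rho_bar K \<beta> \<theta> \<xi> \<eta> \<alpha> (\<lambda>j t. x j t \<omega>) n) \<in> borel_measurable M" by (rule rho_bar_meas)
    have Ym[measurable]: "Y \<in> borel_measurable M" unfolding Y_def[abs_def] using rbm by measurable
    define Ymax where "Ymax = real n * (R + \<bar>mu istar\<bar>)"
    have Ybd: "\<bar>Y \<omega>\<bar> \<le> Ymax" if "\<omega> \<in> space M" for \<omega>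
    proof -
      have "\<bar>Y \<omega>\<bar> \<le> real n * \<bar>rho_bar K \<beta> \<theta> \<xi> \<eta> \<alpha> (\<lambda>j t. x j t \<omega>) n\<bar> + real n * \<bar>mu istar\<bar>"
        unfolding Y_def using abs_triangle_ineq4[of "real n * rho_bar K \<beta> \<theta> \<xi> \<eta> \<alpha> (\<lambda>j t. x j t \<omega>) n" "real n * mu istar"]
        by (simp add: abs_mult)
      also have "\<dots> \<le> real n * R + real n * \<bar>mu istar\<bar>"
        using rb_bound[OF that, of n] by (intro add_mono mult_left_mono) auto
      finally show ?thesis unfolding Ymax_def by (simp add: algebra_simps)
    qed
    have Ymax0: "Ymax \<ge> 0" unfolding Ymax_def using Rnn by simp
    define N where "N = nat \<lceil>Ymax / B\<rceil>"
    have NB: "Ymax \<le> real N * B"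
    proof -
      have "Ymax / B \<le> real N" unfolding N_def using Ymax0 Bpos by linarith
      then show ?thesis using Bpos by (simp add: field_simps)
    qed
    define E where "E k = {\<omega> \<in> space M. real k * B \<le> \<bar>Y \<omega>\<bar>}" for k :: nat
    have Esets[measurable]: "E k \<in> sets M" for k unfolding E_def by measurable
    have ptw: "\<bar>Y \<omega>\<bar> \<le> B * (1 + (\<Sum>k\<in>{1..N}. indicator (E k) \<omega>))" if \<omega>: "\<omega> \<in> space M" for \<omega>
    proof -
      have "(\<Sum>k\<in>{1..N}. indicator (E k) \<omega>) = (\<Sum>k\<in>{1..N}. if real k * B \<le> \<bar>Y \<omega>\<bar> then 1 else 0 :: real)"
        by (intro sum.cong) (auto simp: indicator_def E_def \<omega>)
      moreover have "\<bar>Y \<omega>\<bar> \<le> real N * B" using Ybd[OF \<omega>] NB by linarith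
      ultimately show ?thesis using layer[OF Bpos abs_ge_zero, of "Y \<omega>" N] by simp
    qed
    have intY: "integrable M Y"
      by (rule integrable_const_bound[where B=Ymax]) (use Ybd Ym in auto)
    have intI: "integrable M (\<lambda>\<omega>. indicator (E k) \<omega> :: real)" for k
      by (simp add: integrable_indicator_iff emeasure_finite less_top[symmetric] sets.Int_space_eq2)
    have intS: "integrable M (\<lambda>\<omega>. \<Sum>k\<in>{1..N}. indicator (E k) \<omega> :: real)"
      by (rule Bochner_Integration.integrable_sum) (rule intI)
    have intR: "integrable M (\<lambda>\<omega>. B * (1 + (\<Sum>k\<in>{1..N}. indicator (E k) \<omega>)))"
      by (intro integrable_mult_right Bochner_Integration.integrable_add integrable_const intS)
    have PE: "prob (E k) \<le> 2 * th * real k powr (1 - \<alpha>)" if k: "k \<in> {1..N}" for k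
    proof -
      have k1: "real k \<ge> 1" using k by simp
      define U where "U = {\<omega> \<in> space M. real n * rho_bar K \<beta> \<theta> \<xi> \<eta> \<alpha> (\<lambda>j t. x j t \<omega>) n
              - real n * mu istar \<ge> real n powr etap * real k}"
      define L where "L = {\<omega> \<in> space M. real n * rho_bar K \<beta> \<theta> \<xi> \<eta> \<alpha> (\<lambda>j t. x j t \<omega>) n
              - real n * mu istar \<le> - (real n powr etap * real k)}"
      have Us: "U \<in> sets M" unfolding U_def using Ym unfolding Y_def[abs_def] by measurable
      have Ls: "L \<in> sets M" unfolding L_def using Ym unfolding Y_def[abs_def] by measurable
      have "E k \<subseteq> U \<union> L"
      proof
        fix \<omega> assume "\<omega> \<in> E k"
        then have "\<omega> \<in> space M" "real k * B \<le> \<bar>Y \<omega>\<bar>" unfolding E_def by auto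
        moreover have "real k * B = real n powr etap * real k" unfolding B_def by simp
        ultimately show "\<omega> \<in> U \<union> L" unfolding U_def L_def Y_def by (auto simp: abs_le_iff)
      qed
      then have "prob (E k) \<le> prob (U \<union> L)" using Us Ls by (intro finite_measure_mono) auto
      also have "\<dots> \<le> prob U + prob L" using Us Ls by (intro measure_subadditive) (auto simp: emeasure_finite)
      also have "\<dots> \<le> th / real k powr (\<alpha> - 1) + th / real k powr (\<alpha> - 1)"
        using TB[rule_format, OF n k1] unfolding U_def L_def by (intro add_mono) simp_all
      also have "\<dots> = 2 * th * real k powr (1 - \<alpha>)"
      proof -
        have "real k powr (1 - \<alpha>) = 1 / real k powr (\<alpha> - 1)"
          using powr_minus_divide[of "real k" "\<alpha> - 1"] by simp
        then show ?thesis by simp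
      qed
      finally show ?thesis .
    qed
    have "expectation (\<lambda>\<omega>. \<bar>Y \<omega>\<bar>) \<le> expectation (\<lambda>\<omega>. B * (1 + (\<Sum>k\<in>{1..N}. indicator (E k) \<omega>)))"
      by (rule integral_mono) (use intY intR ptw in auto)
    also have "\<dots> = B * (1 + (\<Sum>k\<in>{1..N}. prob (E k)))"
    proof -
      have "expectation (\<lambda>\<omega>. B * (1 + (\<Sum>k\<in>{1..N}. indicator (E k) \<omega>)))
          = B * expectation (\<lambda>\<omega>. 1 + (\<Sum>k\<in>{1..N}. indicator (E k) \<omega>))" by simp
      also have "expectation (\<lambda>\<omega>. 1 + (\<Sum>k\<in>{1..N}. indicator (E k) \<omega>))
          = expectation (\<lambda>\<omega>. 1) + expectation (\<lambda>\<omega>. \<Sum>k\<in>{1..N}. indicator (E k) \<omega> :: real)"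
        by (rule Bochner_Integration.integral_add) (simp, rule intS)
      also have "expectation (\<lambda>\<omega>. \<Sum>k\<in>{1..N}. indicator (E k) \<omega> :: real) = (\<Sum>k\<in>{1..N}. expectation (indicator (E k)))"
        by (rule Bochner_Integration.integral_sum) (rule intI)
      also have "(\<Sum>k\<in>{1..N}. expectation (indicator (E k))) = (\<Sum>k\<in>{1..N}. prob (E k))"
        by (intro sum.cong) (auto simp: E_def Int_absorb2)
      finally show ?thesis by (simp add: prob_space)
    qed
    also have "\<dots> \<le> B * (1 + (\<Sum>k\<in>{1..N}. 2 * th * real k powr (1 - \<alpha>)))"
      using PE Bpos by (intro mult_left_mono add_left_mono sum_mono) auto
    also have "\<dots> \<le> B * C"
    proof -
      have "(\<Sum>k\<in>{1..N}. real k powr (1 - \<alpha>)) \<le> S"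
        unfolding S_def by (rule sum_le_suminf[OF summ]) auto
      then have "(\<Sum>k\<in>{1..N}. 2 * th * real k powr (1 - \<alpha>)) \<le> 2 * th * S"
        using th1 by (simp add: sum_distrib_left[symmetric])
      then show ?thesis unfolding C_def using Bpos by (intro mult_left_mono) auto
    qed
    finally have EY: "expectation (\<lambda>\<omega>. \<bar>Y \<omega>\<bar>) \<le> B * C" .
    let ?E = "expectation (\<lambda>\<omega>. rho_bar K \<beta> \<theta> \<xi> \<eta> \<alpha> (\<lambda>j t. x j t \<omega>) n)"
    have AEb: "AE \<omega> in M. norm (rho_bar K \<beta> \<theta> \<xi> \<eta> \<alpha> (\<lambda>j t. x j t \<omega>) n) \<le> R"
      by (rule AE_I2) (simp add: rb_bound)
    have intRB: "integrable M (\<lambda>\<omega>. rho_bar K \<beta> \<theta> \<xi> \<eta> \<alpha> (\<lambda>j t. x j t \<omega>) n)"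
      by (rule integrable_const_bound[OF AEb rbm])
    have intRBn: "integrable M (\<lambda>\<omega>. real n * rho_bar K \<beta> \<theta> \<xi> \<eta> \<alpha> (\<lambda>j t. x j t \<omega>) n)"
      by (rule integrable_mult_right[OF intRB])
    have "expectation Y = expectation (\<lambda>\<omega>. real n * rho_bar K \<beta> \<theta> \<xi> \<eta> \<alpha> (\<lambda>j t. x j t \<omega>) n)
        - expectation (\<lambda>\<omega>. real n * mu istar)"
      unfolding Y_def by (rule Bochner_Integration.integral_diff[OF intRBn]) simp
    also have "\<dots> = real n * ?E - real n * mu istar" by (simp add: prob_space)
    also have "\<dots> = real n * (?E - mu istar)" by (simp add: right_diff_distrib)
    finally have EYe: "expectation Y = real n * (?E - mu istar)" .
    have "\<bar>mu istar - ?E\<bar> = \<bar>expectation Y\<bar> / real n"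
      unfolding EYe using n by (simp add: abs_mult abs_minus_commute)
    also have "\<dots> \<le> expectation (\<lambda>\<omega>. \<bar>Y \<omega>\<bar>) / real n"
      using integral_norm_bound[of M Y] n by (intro divide_right_mono) auto
    also have "\<dots> \<le> B * C / real n" using EY n by (intro divide_right_mono) auto
    also have "\<dots> = C * real n powr (etap - 1)"
      unfolding B_def using n by (simp add: powr_diff field_simps)
    finally show "\<bar>mu istar - expectation (\<lambda>\<omega>. rho_bar K \<beta> \<theta> \<xi> \<eta> \<alpha> (\<lambda>j t. x j t \<omega>) n)\<bar>
        \<le> C * real n powr (etap - 1)" .
  qed
qed

end

theorem theorem1:
  fixes M :: "'a measure" and x :: "nat \<Rightarrow> nat \<Rightarrow> 'a \<Rightarrow> real"
    and K :: nat and R \<beta> \<theta> \<xi> \<eta> \<alpha> :: real and mu :: "nat \<Rightarrow> real" and istar :: nat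
  assumes "prob_space M"
    and meas: "\<And>i t. x i t \<in> borel_measurable M"
    and bounded: "\<And>i t \<omega>. \<omega> \<in> space M \<Longrightarrow> \<bar>x i t \<omega>\<bar> \<le> R"
    and "\<beta> > 0"
    and "\<theta> > 1" and "\<xi> > 1" and "1/2 \<le> \<eta>" and "\<eta> < 1"
    and "\<alpha> > 2" and "\<xi> * \<eta> * (1 - \<eta>) \<le> \<alpha>" and "\<alpha> < \<xi> * (1 - \<eta>)"
    and lim: "\<And>i. i < K \<Longrightarrow>
       (\<lambda>n. prob_space.expectation M (\<lambda>\<omega>. rho_hat \<beta> (\<lambda>j t. x j t \<omega>) i n)) \<longlonglongrightarrow> mu i"
    and conc_up: "\<And>i n z. i < K \<Longrightarrow> n \<ge> 1 \<Longrightarrow> z \<ge> 1 \<Longrightarrow>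
       measure M {\<omega> \<in> space M. real n * rho_hat \<beta> (\<lambda>j t. x j t \<omega>) i n - real n * mu i
                               \<ge> real n powr \<eta> * z} \<le> \<theta> / z powr \<xi>"
    and conc_low: "\<And>i n z. i < K \<Longrightarrow> n \<ge> 1 \<Longrightarrow> z \<ge> 1 \<Longrightarrow>
       measure M {\<omega> \<in> space M. real n * rho_hat \<beta> (\<lambda>j t. x j t \<omega>) i n - real n * mu i
                               \<le> - (real n powr \<eta> * z)} \<le> \<theta> / z powr \<xi>"
    and "istar < K"
    and unique: "\<And>i. i < K \<Longrightarrow> i \<noteq> istar \<Longrightarrow> mu istar < mu i"
  shows "(\<lambda>n. \<bar>mu istar - prob_space.expectation M
                 (\<lambda>\<omega>. rho_bar K \<beta> \<theta> \<xi> \<eta> \<alpha> (\<lambda>j t. x j t \<omega>) n)\<bar>)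
           \<in> O(\<lambda>n. exp (2 * \<beta> * R) * real n powr (\<alpha> / (\<xi> * (1 - \<eta>)) - 1))
    \<and> (\<lambda>n. prob_space.expectation M (\<lambda>\<omega>. rho_bar K \<beta> \<theta> \<xi> \<eta> \<alpha> (\<lambda>j t. x j t \<omega>) n))
         \<longlonglongrightarrow> mu istar
    \<and> (\<exists>\<theta>'>1. \<forall>n z. n \<ge> 1 \<longrightarrow> z \<ge> 1 \<longrightarrow>
         measure M {\<omega> \<in> space M. real n * rho_bar K \<beta> \<theta> \<xi> \<eta> \<alpha> (\<lambda>j t. x j t \<omega>) n
              - real n * mu istar \<ge> real n powr (\<alpha> / (\<xi> * (1 - \<eta>))) * z}
           \<le> \<theta>' / z powr (\<alpha> - 1)
       \<and> measure M {\<omega> \<in> space M. real n * rho_bar K \<beta> \<theta> \<xi> \<eta> \<alpha> (\<lambda>j t. x j t \<omega>) n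
              - real n * mu istar \<le> - (real n powr (\<alpha> / (\<xi> * (1 - \<eta>))) * z)}
           \<le> \<theta>' / z powr (\<alpha> - 1))"
  proof -
  interpret bandit M x K R \<beta> \<theta> \<xi> \<eta> \<alpha> mu istar
    by (intro bandit.intro bandit_axioms.intro) (fact assms)+
  obtain C where C: "\<And>n. n \<ge> 1 \<Longrightarrow> \<bar>mu istar - expectation (\<lambda>\<omega>. rho_bar K \<beta> \<theta> \<xi> \<eta> \<alpha> (\<lambda>j t. x j t \<omega>) n)\<bar>
            \<le> C * real n powr (etap - 1)"
    using exp_bound by blast
  have ev: "eventually (\<lambda>n. \<bar>mu istar - expectation (\<lambda>\<omega>. rho_bar K \<beta> \<theta> \<xi> \<eta> \<alpha> (\<lambda>j t. x j t \<omega>) n)\<bar>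
            \<le> C * real n powr (etap - 1)) sequentially"
    using C by (intro eventually_sequentiallyI[of 1]) auto
  have P1: "(\<lambda>n. \<bar>mu istar - expectation (\<lambda>\<omega>. rho_bar K \<beta> \<theta> \<xi> \<eta> \<alpha> (\<lambda>j t. x j t \<omega>) n)\<bar>)
           \<in> O(\<lambda>n. exp (2 * \<beta> * R) * real n powr (\<alpha> / (\<xi> * (1 - \<eta>)) - 1))"
  proof (rule bigoI[where c="\<bar>C\<bar> / exp (2 * \<beta> * R)"])
    show "eventually (\<lambda>n. norm (\<bar>mu istar - expectation (\<lambda>\<omega>. rho_bar K \<beta> \<theta> \<xi> \<eta> \<alpha> (\<lambda>j t. x j t \<omega>) n)\<bar>)
        \<le> \<bar>C\<bar> / exp (2 * \<beta> * R) * norm (exp (2 * \<beta> * R) * real n powr (\<alpha> / (\<xi> * (1 - \<eta>)) - 1))) at_top"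
    proof (rule eventually_mono[OF ev])
      fix n
      assume h: "\<bar>mu istar - expectation (\<lambda>\<omega>. rho_bar K \<beta> \<theta> \<xi> \<eta> \<alpha> (\<lambda>j t. x j t \<omega>) n)\<bar>
            \<le> C * real n powr (etap - 1)"
      have "C * real n powr (etap - 1) \<le> \<bar>C\<bar> * real n powr (etap - 1)" by (intro mult_right_mono) auto
      also have "\<dots> = \<bar>C\<bar> / exp (2 * \<beta> * R) * norm (exp (2 * \<beta> * R) * real n powr (\<alpha> / (\<xi> * (1 - \<eta>)) - 1))"
        unfolding etap_def by (simp add: abs_mult)
      finally show "norm (\<bar>mu istar - expectation (\<lambda>\<omega>. rho_bar K \<beta> \<theta> \<xi> \<eta> \<alpha> (\<lambda>j t. x j t \<omega>) n)\<bar>)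
        \<le> \<bar>C\<bar> / exp (2 * \<beta> * R) * norm (exp (2 * \<beta> * R) * real n powr (\<alpha> / (\<xi> * (1 - \<eta>)) - 1))"
        using h by simp
    qed
  qed
  have P2: "(\<lambda>n. expectation (\<lambda>\<omega>. rho_bar K \<beta> \<theta> \<xi> \<eta> \<alpha> (\<lambda>j t. x j t \<omega>) n)) \<longlonglongrightarrow> mu istar"
  proof (rule LIM_zero_cancel)
    have g0: "(\<lambda>n. real n powr (etap - 1)) \<longlonglongrightarrow> 0"
      using etap by (intro tendsto_neg_powr filterlim_real_sequentially) auto
    have "(\<lambda>n. C * real n powr (etap - 1)) \<longlonglongrightarrow> C * 0" by (intro tendsto_mult tendsto_const g0)
    then have g: "(\<lambda>n. C * real n powr (etap - 1)) \<longlonglongrightarrow> 0" by simp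
    show "(\<lambda>n. expectation (\<lambda>\<omega>. rho_bar K \<beta> \<theta> \<xi> \<eta> \<alpha> (\<lambda>j t. x j t \<omega>) n) - mu istar) \<longlonglongrightarrow> 0"
    proof (rule Lim_null_comparison[OF _ g])
      show "eventually (\<lambda>n. norm (expectation (\<lambda>\<omega>. rho_bar K \<beta> \<theta> \<xi> \<eta> \<alpha> (\<lambda>j t. x j t \<omega>) n) - mu istar)
            \<le> C * real n powr (etap - 1)) sequentially"
        using ev by eventually_elim (simp add: abs_minus_commute)
    qed
  qed
  have P3: "\<exists>\<theta>'>1. \<forall>n z. n \<ge> 1 \<longrightarrow> z \<ge> 1 \<longrightarrow>
         measure M {\<omega> \<in> space M. real n * rho_bar K \<beta> \<theta> \<xi> \<eta> \<alpha> (\<lambda>j t. x j t \<omega>) n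
              - real n * mu istar \<ge> real n powr (\<alpha> / (\<xi> * (1 - \<eta>))) * z}
           \<le> \<theta>' / z powr (\<alpha> - 1)
       \<and> measure M {\<omega> \<in> space M. real n * rho_bar K \<beta> \<theta> \<xi> \<eta> \<alpha> (\<lambda>j t. x j t \<omega>) n
              - real n * mu istar \<le> - (real n powr (\<alpha> / (\<xi> * (1 - \<eta>))) * z)}
           \<le> \<theta>' / z powr (\<alpha> - 1)"
    by (rule tail)
  show ?thesis using P1 P2 P3 by blast
qed

end
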